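(* Let $\mathcal T$ be a locally finite partial tessellation of ${\mathbb X}$. Every side of $\mathcal T$ is contained in exactly two tiles of $\mathcal T$, and it is equal to the intersection of these two tiles.
   Context: ${\mathbb X}$ is $\mathbb R^n$, the unit sphere $\mathbb S^n$, or hyperbolic $n$-space. A subspace is a complete totally geodesic submanifold; a hyperplane is a subspace of codimension 1; closed half-spaces are the closures of the two components of the complement of a hyperplane. A polyhedron is a nonempty intersection of a family of closed half-spaces whose boundary hyperplanes form a locally finite family; its codimension is the codimension of the smallest subspace containing it, and its relative interior $C^r$ is its interior in that subspace. It is thick if it has nonempty interior in ${\mathbb X}$. A partial tessellation is a set of thick polyhedra (tiles) with pairwise disjoint interiors; locally finite means every compact set meets only finitely many tiles. A cell of $\mathcal T$ is a nonempty intersection $C$ of tiles such that for every tile $T$ either $C\subseteq T$ or $C^r\cap T=\emptyset$; a side is a cell of codimension 1. *)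

theory Defs
  imports "HOL-Analysis.Analysis"
begin

text \<open>Euclidean: X = 'a itself (R^n, n = DIM('a)).
  Spherical: X = unit sphere in 'a (S^n, n = DIM('a) - 1); subspaces are the
    great spheres X \<inter> L, L a linear subspace.
  Hyperbolic: Beltrami--Klein (projective) model, X = open unit ball in 'a
    (H^n, n = DIM('a)); subspaces are the nonempty sets X \<inter> A, A affine.\<close>

datatype geom = Euclidean | Spherical | Hyperbolic

definition space :: "geom \<Rightarrow> 'a::euclidean_space set" where
  "space M = (case M of Euclidean \<Rightarrow> UNIV | Spherical \<Rightarrow> sphere 0 1 | Hyperbolic \<Rightarrow> ball 0 1)"

definition hyperplane_ok :: "geom \<Rightarrow> 'a::euclidean_space \<Rightarrow> real \<Rightarrow> bool" where
  "hyperplane_ok M a b \<longleftrightarrow> a \<noteq> 0 \<and> (M = Spherical \<longrightarrow> b = 0)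
     \<and> space M \<inter> {x. a \<bullet> x = b} \<noteq> {}"

definition hyperplane :: "geom \<Rightarrow> 'a::euclidean_space set \<Rightarrow> bool" where
  "hyperplane M H \<longleftrightarrow> (\<exists>a b. hyperplane_ok M a b \<and> H = space M \<inter> {x. a \<bullet> x = b})"

definition closed_halfspace :: "geom \<Rightarrow> 'a::euclidean_space set \<Rightarrow> bool" where
  "closed_halfspace M S \<longleftrightarrow> (\<exists>a b. hyperplane_ok M a b \<and> S = space M \<inter> {x. a \<bullet> x \<le> b})"

definition locally_finite_fam :: "geom \<Rightarrow> 'a::euclidean_space set set \<Rightarrow> bool" where
  "locally_finite_fam M \<A> \<longleftrightarrow>
     (\<forall>K. compact K \<and> K \<subseteq> space M \<longrightarrow> finite {A \<in> \<A>. A \<inter> K \<noteq> {}})"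

definition polyhedron :: "geom \<Rightarrow> 'a::euclidean_space set \<Rightarrow> bool" where
  "polyhedron M P \<longleftrightarrow> P \<noteq> {} \<and>
     (\<exists>F. (\<forall>S\<in>F. closed_halfspace M S)
        \<and> locally_finite_fam M ((\<lambda>S. top_of_set (space M) frontier_of S) ` F)
        \<and> P = space M \<inter> \<Inter>F)"

definition geodesic_hull :: "geom \<Rightarrow> 'a::euclidean_space set \<Rightarrow> 'a set" where
  "geodesic_hull M C = (case M of
      Euclidean \<Rightarrow> affine hull C
    | Spherical \<Rightarrow> space M \<inter> span C
    | Hyperbolic \<Rightarrow> space M \<inter> affine hull C)"

definition codim :: "geom \<Rightarrow> 'a::euclidean_space set \<Rightarrow> int" where
  "codim M C = (case M of
      Spherical \<Rightarrow> int DIM('a) - int (dim (span C))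
    | _ \<Rightarrow> int DIM('a) - aff_dim C)"

definition relint :: "geom \<Rightarrow> 'a::euclidean_space set \<Rightarrow> 'a set" where
  "relint M C = top_of_set (geodesic_hull M C) interior_of C"

definition thick :: "geom \<Rightarrow> 'a::euclidean_space set \<Rightarrow> bool" where
  "thick M P \<longleftrightarrow> top_of_set (space M) interior_of P \<noteq> {}"

definition partial_tessellation :: "geom \<Rightarrow> 'a::euclidean_space set set \<Rightarrow> bool" where
  "partial_tessellation M \<T> \<longleftrightarrow>
     (\<forall>T\<in>\<T>. polyhedron M T \<and> thick M T) \<and>
     (\<forall>T1\<in>\<T>. \<forall>T2\<in>\<T>. T1 \<noteq> T2 \<longrightarrow>
        top_of_set (space M) interior_of T1 \<inter> top_of_set (space M) interior_of T2 = {})"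

definition cell :: "geom \<Rightarrow> 'a::euclidean_space set set \<Rightarrow> 'a set \<Rightarrow> bool" where
  "cell M \<T> C \<longleftrightarrow> C \<noteq> {} \<and> (\<exists>\<S>. \<S> \<subseteq> \<T> \<and> \<S> \<noteq> {} \<and> C = \<Inter>\<S>) \<and>
     (\<forall>T\<in>\<T>. C \<subseteq> T \<or> relint M C \<inter> T = {})"

definition side :: "geom \<Rightarrow> 'a::euclidean_space set set \<Rightarrow> 'a set \<Rightarrow> bool" where
  "side M \<T> C \<longleftrightarrow> cell M \<T> C \<and> codim M C = 1"

end

theory Submission
  imports Defs
begin


lemma halfball:
  fixes K :: "'a::euclidean_space set"
  assumes cK: "convex K" and a0: "a \<noteq> 0" and ap: "a \<bullet> p = b" and r0: "r>0"
    and sub: "ball p r \<inter> {y. a \<bullet> y = b} \<subseteq> K" and xi: "x \<in> interior K" and ax: "a \<bullet> x > b"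
  shows "\<exists>\<delta>>0. \<forall>y. y \<in> ball p \<delta> \<and> a \<bullet> y > b \<longrightarrow> y \<in> interior K"
proof -
  define h where "h = a \<bullet> x - b"
  have h0: "h > 0" using ax h_def by simp
  define c where "c = norm a / h"
  have c0: "c > 0" using a0 h0 c_def by simp
  define L where "L = norm (x - p)"
  have L0: "L \<ge> 0" using L_def by simp
  define \<delta> where "\<delta> = min (1/(2*c)) (r / (4*(1+c*L)))"
  have d0: "\<delta> > 0" using c0 L0 r0 \<delta>_def by (simp add: add_pos_nonneg)
  have dc: "c * \<delta> \<le> 1/2"
  proof -
    have "\<delta> \<le> 1/(2*c)" using \<delta>_def by simp
    hence "\<delta> * (2*c) \<le> 1" using c0 by (simp add: pos_le_divide_eq)
    thus ?thesis by (simp add: algebra_simps)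
  qed
  have dr: "2 * (\<delta> * (1 + c*L)) \<le> r/2"
  proof -
    have "\<delta> \<le> r / (4*(1+c*L))" using \<delta>_def by simp
    moreover have "1 + c*L > 0" using c0 L0 by (simp add: add_pos_nonneg)
    ultimately have "\<delta> * (4*(1+c*L)) \<le> r" by (simp add: pos_le_divide_eq)
    hence "\<delta> * (1+c*L) \<le> r/4" by (simp add: algebra_simps)
    thus ?thesis by simp
  qed
  show ?thesis
  proof (intro exI[of _ \<delta>] conjI allI impI)
    show "\<delta> > 0" by (fact d0)
    fix y assume yy: "y \<in> ball p \<delta> \<and> a \<bullet> y > b"
    define t where "t = norm (y - p)"
    have t\<delta>: "t < \<delta>" using yy t_def by (simp add: dist_norm norm_minus_commute)
    define lam where "lam = (a \<bullet> y - b) / h"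
    have l0: "lam > 0" using yy h0 lam_def by simp
    have "a \<bullet> y - b = a \<bullet> (y - p)" using ap by (simp add: inner_diff_right)
    also have "\<dots> \<le> norm a * t" using Cauchy_Schwarz_ineq2[of a "y-p"] unfolding t_def by linarith
    finally have "lam \<le> c * t" using lam_def c_def h0 by (simp add: divide_right_mono)
    hence lct: "lam \<le> c * t" .
    have "c * t \<le> c * \<delta>" using c0 t\<delta> by simp
    hence lc: "lam \<le> c * \<delta>" using lct by simp
    hence l1: "lam \<le> 1/2" using dc by simp
    define d where "d = inverse (1 - lam) *\<^sub>R (y - lam *\<^sub>R x)"
    have yd: "y = d - lam *\<^sub>R (d - x)"
    proof -
      have "(1 - lam) *\<^sub>R d = y - lam *\<^sub>R x" using l1 d_def by simp
      hence "y = (1 - lam) *\<^sub>R d + lam *\<^sub>R x" by (simp add: algebra_simps)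
      thus ?thesis by (simp add: algebra_simps)
    qed
    have adb: "a \<bullet> d = b"
    proof -
      have "a \<bullet> y - b = lam * h" using lam_def h0 by simp
      hence "a \<bullet> y - lam * (a \<bullet> x) = (1 - lam) * b" using h_def by (simp add: algebra_simps)
      hence "a \<bullet> (y - lam *\<^sub>R x) = (1 - lam) * b" by (simp add: inner_diff_right)
      moreover have "a \<bullet> d = inverse (1 - lam) * (a \<bullet> (y - lam *\<^sub>R x))"
        unfolding d_def by (rule inner_scaleR_right)
      ultimately show ?thesis using l1 by simp
    qed
    have dd: "(1 - lam) *\<^sub>R d = y - lam *\<^sub>R x" using l1 d_def by simp
    have "(1 - lam) *\<^sub>R (d - p) = (1 - lam) *\<^sub>R d - (1 - lam) *\<^sub>R p"
      by (rule scaleR_right_diff_distrib)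
    also have "\<dots> = y - lam *\<^sub>R x - (1 - lam) *\<^sub>R p" using dd by simp
    also have "\<dots> = (y - p) - lam *\<^sub>R (x - p)" by (simp add: algebra_simps)
    finally have e1: "(1 - lam) *\<^sub>R (d - p) = (y - p) - lam *\<^sub>R (x - p)" .
    have "(1 - lam) * norm (d - p) = norm ((y - p) - lam *\<^sub>R (x - p))"
      using arg_cong[OF e1, of norm] l1 by simp
    hence "norm (d - p) = inverse (1 - lam) * norm ((y - p) - lam *\<^sub>R (x - p))"
      using l1 by (simp add: field_simps)
    also have "\<dots> \<le> 2 * norm ((y - p) - lam *\<^sub>R (x - p))"
      using l1 l0 by (intro mult_right_mono) (auto simp: field_simps)
    also have "\<dots> \<le> 2 * (t + lam * L)"
      using norm_triangle_ineq4[of "y-p" "lam *\<^sub>R (x - p)"] l0 t_def L_def by simp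
    also have "\<dots> < 2 * (\<delta> + c * \<delta> * L)"
    proof -
      have "lam * L \<le> c * \<delta> * L" using lc L0 by (simp add: mult_right_mono)
      thus ?thesis using t\<delta> by simp
    qed
    also have "\<dots> \<le> r/2" using dr by (simp add: algebra_simps)
    finally have "norm (d - p) < r" using r0 by simp
    hence "d \<in> ball p r" by (simp add: dist_norm norm_minus_commute)
    hence "d \<in> K" using sub adb by auto
    hence "d \<in> closure K" using closure_subset by blast
    from mem_interior_closure_convex_shrink[OF cK xi this l0] l1
    show "y \<in> interior K" using yd by simp
  qed
qed

lemma same_side:
  fixes K :: "'i \<Rightarrow> 'a::euclidean_space set"
  assumes i: "convex (K i)" "ball p r \<inter> {y. a \<bullet> y = b} \<subseteq> K i"
    and j: "convex (K j)" "ball p r \<inter> {y. a \<bullet> y = b} \<subseteq> K j"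
    and a0: "a \<noteq> 0" and ap: "a \<bullet> p = b" and r0: "r > 0"
    and dis: "interior (K i) \<inter> interior (K j) = {}"
    and xi: "xi \<in> interior (K i)" "a \<bullet> xi > b"
    and xj: "xj \<in> interior (K j)" "a \<bullet> xj > b"
  shows False
proof -
  obtain d1 where d1: "d1 > 0" "\<forall>y. y \<in> ball p d1 \<and> a \<bullet> y > b \<longrightarrow> y \<in> interior (K i)"
    using halfball[OF i(1) a0 ap r0 i(2) xi] by blast
  obtain d2 where d2: "d2 > 0" "\<forall>y. y \<in> ball p d2 \<and> a \<bullet> y > b \<longrightarrow> y \<in> interior (K j)"
    using halfball[OF j(1) a0 ap r0 j(2) xj] by blast
  define \<delta> where "\<delta> = min d1 d2"
  have dp: "\<delta> > 0" using d1 d2 \<delta>_def by simp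
  define s where "s = \<delta> / (2 * norm a)"
  have s0: "s > 0" using dp a0 s_def by simp
  define y where "y = p + s *\<^sub>R a"
  have "dist p y = s * norm a" using y_def s0 by (simp add: dist_norm)
  also have "\<dots> = \<delta> / 2" using a0 s_def by simp
  finally have "dist p y < \<delta>" using dp by simp
  hence yb: "y \<in> ball p d1" "y \<in> ball p d2" using \<delta>_def by auto
  have "a \<bullet> y = b + s * (a \<bullet> a)" using y_def ap by (simp add: inner_add_right)
  moreover have "a \<bullet> a > 0" using a0 by simp
  ultimately have "a \<bullet> y > b" using s0 by simp
  thus False using d1 d2 yb dis by blast
qed

lemma side_point:
  fixes K :: "'a::euclidean_space set"
  assumes "interior K \<noteq> {}" "a \<noteq> 0"
  shows "\<exists>x\<in>interior K. a \<bullet> x > b \<or> (-a) \<bullet> x > -b"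
proof (rule ccontr)
  assume "\<not> ?thesis"
  hence "interior K \<subseteq> {x. a \<bullet> x = b}" by force
  hence "interior (interior K) \<subseteq> interior {x. a \<bullet> x = b}" by (rule interior_mono)
  thus False using assms by simp
qed

lemma three_contra:
  fixes K :: "'i \<Rightarrow> 'a::euclidean_space set"
  assumes H: "\<And>i. i \<in> I \<Longrightarrow> convex (K i) \<and> interior (K i) \<noteq> {} \<and> ball p r \<inter> {y. a \<bullet> y = b} \<subseteq> K i"
    and a0: "a \<noteq> 0" and ap: "a \<bullet> p = b" and r0: "r > 0"
    and dis: "\<And>i j. i \<in> I \<Longrightarrow> j \<in> I \<Longrightarrow> i \<noteq> j \<Longrightarrow> interior (K i) \<inter> interior (K j) = {}"
    and ijk: "i \<in> I" "j \<in> I" "k \<in> I" "i \<noteq> j" "i \<noteq> k" "j \<noteq> k"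
  shows False
proof -
  have hyp: "{y. (-a) \<bullet> y = -b} = {y. a \<bullet> y = b}" by auto
  have a0': "-a \<noteq> 0" using a0 by simp
  have ap': "(-a) \<bullet> p = -b" using ap by simp
  have pos: "False" if "u \<in> I" "v \<in> I" "u \<noteq> v" "xu \<in> interior (K u)" "a \<bullet> xu > b"
      "xv \<in> interior (K v)" "a \<bullet> xv > b" for u v xu xv
    using same_side[of K u p r a b v xu xv] H[OF that(1)] H[OF that(2)] dis[OF that(1-3)] that a0 ap r0
    by blast
  have neg: "False" if "u \<in> I" "v \<in> I" "u \<noteq> v" "xu \<in> interior (K u)" "(-a) \<bullet> xu > -b"
      "xv \<in> interior (K v)" "(-a) \<bullet> xv > -b" for u v xu xv
    using same_side[of K u p r "-a" "-b" v xu xv] H[OF that(1)] H[OF that(2)] dis[OF that(1-3)] that a0' ap' r0 hyp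
    by auto
  obtain xi where xi: "xi \<in> interior (K i)" "a \<bullet> xi > b \<or> (-a) \<bullet> xi > -b"
    using side_point[of "K i" a b] H[OF ijk(1)] a0 by blast
  obtain xj where xj: "xj \<in> interior (K j)" "a \<bullet> xj > b \<or> (-a) \<bullet> xj > -b"
    using side_point[of "K j" a b] H[OF ijk(2)] a0 by blast
  obtain xk where xk: "xk \<in> interior (K k)" "a \<bullet> xk > b \<or> (-a) \<bullet> xk > -b"
    using side_point[of "K k" a b] H[OF ijk(3)] a0 by blast
  show False
    using pos[OF ijk(1) ijk(2) ijk(4) xi(1) _ xj(1)] pos[OF ijk(1) ijk(3) ijk(5) xi(1) _ xk(1)]
      pos[OF ijk(2) ijk(3) ijk(6) xj(1) _ xk(1)]
      neg[OF ijk(1) ijk(2) ijk(4) xi(1) _ xj(1)] neg[OF ijk(1) ijk(3) ijk(5) xi(1) _ xk(1)]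
      neg[OF ijk(2) ijk(3) ijk(6) xj(1) _ xk(1)] xi(2) xj(2) xk(2) by blast
qed

lemma abstract_main:
  fixes K :: "'a::euclidean_space set \<Rightarrow> 'b::euclidean_space set"
  assumes CS: "C = \<Inter>S" "S \<subseteq> Ts" "S \<noteq> {}"
    and H: "\<And>T. T \<in> Ts \<Longrightarrow> C \<subseteq> T \<Longrightarrow> convex (K T) \<and> interior (K T) \<noteq> {} \<and> ball p r \<inter> {y. a \<bullet> y = b} \<subseteq> K T"
    and a0: "a \<noteq> 0" and ap: "a \<bullet> p = b" and r0: "r > 0"
    and dis: "\<And>T1 T2. T1 \<in> Ts \<Longrightarrow> T2 \<in> Ts \<Longrightarrow> T1 \<noteq> T2 \<Longrightarrow> interior (K T1) \<inter> interior (K T2) = {}"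
    and nt: "\<And>T. T \<in> Ts \<Longrightarrow> C \<noteq> T"
  shows "\<exists>T1 T2. T1 \<in> Ts \<and> T2 \<in> Ts \<and> T1 \<noteq> T2 \<and> {T \<in> Ts. C \<subseteq> T} = {T1, T2} \<and> C = T1 \<inter> T2"
proof -
  obtain T1 where T1: "T1 \<in> S" using CS by blast
  have "S \<noteq> {T1}" using nt[of T1] T1 CS by auto
  then obtain T2 where T2: "T2 \<in> S" "T2 \<noteq> T1" using T1 by blast
  define P where "P = {T \<in> Ts. C \<subseteq> T}"
  have SP: "S \<subseteq> P" using CS P_def by auto
  have HP: "\<And>T. T \<in> P \<Longrightarrow> convex (K T) \<and> interior (K T) \<noteq> {} \<and> ball p r \<inter> {y. a \<bullet> y = b} \<subseteq> K T"
    using H P_def by auto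
  have disP: "\<And>T1 T2. T1 \<in> P \<Longrightarrow> T2 \<in> P \<Longrightarrow> T1 \<noteq> T2 \<Longrightarrow> interior (K T1) \<inter> interior (K T2) = {}"
    using dis P_def by auto
  have "P \<subseteq> {T1, T2}"
  proof
    fix T assume "T \<in> P"
    show "T \<in> {T1, T2}"
    proof (rule ccontr)
      assume "T \<notin> {T1, T2}"
      thus False using three_contra[where I=P and K=K and i=T1 and j=T2 and k=T, OF HP a0 ap r0 disP] T1 T2 SP \<open>T \<in> P\<close> by auto
    qed
  qed
  hence PE: "P = {T1, T2}" using T1 T2 SP by auto
  hence "S = {T1, T2}" using SP T1 T2 by auto
  hence "C = T1 \<inter> T2" using CS by auto
  moreover have "T1 \<in> Ts" "T2 \<in> Ts" using T1 T2 CS by auto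
  ultimately show ?thesis using PE P_def T2(2) by blast
qed



lemma flat_case:
  fixes M :: geom and \<T> :: "'a::euclidean_space set set" and C :: "'a set"
  assumes nS: "M \<noteq> Spherical"
    and pt: "partial_tessellation M \<T>"
    and sd: "side M \<T> C"
  shows "\<exists>T1 T2. T1 \<in> \<T> \<and> T2 \<in> \<T> \<and> T1 \<noteq> T2 \<and> {T \<in> \<T>. C \<subseteq> T} = {T1, T2} \<and> C = T1 \<inter> T2"
proof -
  have sp: "open (space M :: 'a set)" "convex (space M :: 'a set)"
    using nS by (cases M; simp add: space_def)+
  have cod: "\<And>X::'a set. codim M X = int DIM('a) - aff_dim X"
    using nS by (cases M) (auto simp: codim_def)
  have intr: "top_of_set (space M) interior_of T = interior T" if "T \<subseteq> space M" for T :: "'a set"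
  proof -
    have "top_of_set (space M) interior_of T = space M \<inter> euclidean interior_of T"
      using interior_of_subtopology_open[of euclidean "space M" T] sp by simp
    thus ?thesis using that interior_subset[of T] by auto
  qed
  have poly: "T \<subseteq> space M \<and> convex T" if "polyhedron M T" for T :: "'a set"
  proof -
    have "\<exists>F. (\<forall>S\<in>F. closed_halfspace M S)
        \<and> locally_finite_fam M ((\<lambda>S. top_of_set (space M) frontier_of S) ` F)
        \<and> T = space M \<inter> \<Inter>F" using that unfolding polyhedron_def by (rule conjunct2)
    then obtain F where F0: "(\<forall>S\<in>F. closed_halfspace M S)
        \<and> locally_finite_fam M ((\<lambda>S. top_of_set (space M) frontier_of S) ` F)
        \<and> T = space M \<inter> \<Inter>F" by (rule exE)
    have F: "\<forall>S\<in>F. closed_halfspace M S" "T = space M \<inter> \<Inter>F" using F0 by simp_all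
    have "\<forall>S\<in>F. convex S"
    proof
      fix S assume "S \<in> F"
      hence "closed_halfspace M S" using F by simp
      then obtain a b where "S = space M \<inter> {x. a \<bullet> x \<le> b}"
        unfolding closed_halfspace_def by auto
      thus "convex S" using sp(2) by (simp add: convex_Int convex_halfspace_le)
    qed
    hence "convex (\<Inter>F)" using convex_Inter[of F] by blast
    thus ?thesis using F sp(2) by (simp add: convex_Int)
  qed
  have tile: "T \<subseteq> space M \<and> convex T \<and> interior T \<noteq> {}" if "T \<in> \<T>" for T
  proof -
    have "polyhedron M T" "thick M T" using pt that unfolding partial_tessellation_def by auto
    hence "T \<subseteq> space M" "convex T" "top_of_set (space M) interior_of T \<noteq> {}"
      using poly unfolding thick_def by auto
    thus ?thesis using intr by simp
  qed
  have dis: "interior T1 \<inter> interior T2 = {}" if "T1 \<in> \<T>" "T2 \<in> \<T>" "T1 \<noteq> T2" for T1 T2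
  proof -
    have "top_of_set (space M) interior_of T1 \<inter> top_of_set (space M) interior_of T2 = {}"
      using pt that unfolding partial_tessellation_def by blast
    thus ?thesis using intr tile that by simp
  qed
  have tc: "codim M T = 0" if "T \<in> \<T>" for T
    using tile[OF that] aff_dim_nonempty_interior[of T] cod by simp
  obtain S where S: "C \<noteq> {}" "S \<subseteq> \<T>" "S \<noteq> {}" "C = \<Inter>S" and c1: "codim M C = 1"
    using sd unfolding side_def cell_def by blast
  have cC: "convex C" using S tile by (auto intro!: convex_Inter)
  have "aff_dim C = int DIM('a) - 1" using c1 cod by simp
  then obtain a b where ab: "a \<noteq> 0" "affine hull C = {x. a \<bullet> x = b}"
    using aff_dim_eq_hyperplane[of C] by (auto simp: of_nat_diff)
  have "rel_interior C \<noteq> {}" using rel_interior_eq_empty[OF cC] S by simp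
  then obtain p where "p \<in> rel_interior C" by blast
  then obtain r where pr: "p \<in> C" "r > 0" "ball p r \<inter> affine hull C \<subseteq> C"
    using mem_rel_interior_ball by blast
  have ap: "a \<bullet> p = b" using pr(1) hull_subset[of C affine] ab by auto
  show ?thesis
  proof (rule abstract_main[where K=id, OF S(4) S(2) S(3) _ ab(1) ap pr(2)])
    fix T assume "T \<in> \<T>" "C \<subseteq> T"
    thus "convex (id T) \<and> interior (id T) \<noteq> {} \<and> ball p r \<inter> {y. a \<bullet> y = b} \<subseteq> id T"
      using tile pr ab by auto
  next
    fix T1 T2 assume "T1 \<in> \<T>" "T2 \<in> \<T>" "T1 \<noteq> T2"
    thus "interior (id T1) \<inter> interior (id T2) = {}" using dis by simp
  next
    fix T assume "T \<in> \<T>"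
    thus "C \<noteq> T" using tc c1 by auto
  qed
qed



lemma cone_scale:
  fixes K :: "'a::euclidean_space set"
  shows "cone K \<Longrightarrow> x \<in> K \<Longrightarrow> 0 \<le> c \<Longrightarrow> c *\<^sub>R x \<in> K"
  by (simp add: cone_def)

lemma sph_poly:
  fixes T :: "'a::euclidean_space set"
  assumes "polyhedron Spherical T"
  shows "\<exists>K. convex K \<and> cone K \<and> T = sphere 0 1 \<inter> K"
proof -
  have "\<exists>F. (\<forall>S\<in>F. closed_halfspace Spherical S)
        \<and> locally_finite_fam Spherical ((\<lambda>S. top_of_set (space Spherical) frontier_of S) ` F)
        \<and> T = space Spherical \<inter> \<Inter>F" using assms unfolding polyhedron_def by (rule conjunct2)
  then obtain F where F0: "(\<forall>S\<in>F. closed_halfspace Spherical S)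
        \<and> locally_finite_fam Spherical ((\<lambda>S. top_of_set (space Spherical) frontier_of S) ` F)
        \<and> T = space Spherical \<inter> \<Inter>F" by (rule exE)
  have F: "\<forall>S\<in>F. closed_halfspace Spherical S" "T = sphere 0 1 \<inter> \<Inter>F"
    using F0 by (simp_all add: space_def)
  have FS: "\<exists>a. S = sphere 0 1 \<inter> {x. a \<bullet> x \<le> 0}" if "S \<in> F" for S
  proof -
    have "closed_halfspace Spherical S" using F that by simp
    then obtain a b where "hyperplane_ok Spherical a b" "S = space Spherical \<inter> {x. a \<bullet> x \<le> b}"
      unfolding closed_halfspace_def by auto
    thus ?thesis unfolding hyperplane_ok_def by (auto simp: space_def)
  qed
  define G where "G = {g. \<exists>a. g = {x::'a. a \<bullet> x \<le> 0} \<and> sphere 0 1 \<inter> g \<in> F}"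
  have cG: "convex (\<Inter>G)"
  proof -
    have "\<forall>g\<in>G. convex g" unfolding G_def by (auto simp: convex_halfspace_le)
    thus ?thesis using convex_Inter[of G] by blast
  qed
  have coG: "cone (\<Inter>G)"
  proof -
    have "\<forall>g\<in>G. cone g" unfolding G_def cone_def by (auto simp: mult_nonneg_nonpos)
    thus ?thesis by (rule cone_Inter)
  qed
  have "T = sphere 0 1 \<inter> \<Inter>G"
  proof
    show "T \<subseteq> sphere 0 1 \<inter> \<Inter>G" using F(2) unfolding G_def by auto
    show "sphere 0 1 \<inter> \<Inter>G \<subseteq> T"
    proof
      fix x assume x: "x \<in> sphere 0 1 \<inter> \<Inter>G"
      have "x \<in> S" if SF: "S \<in> F" for S
      proof -
        obtain a where a: "S = sphere 0 1 \<inter> {x. a \<bullet> x \<le> 0}" using FS[OF SF] by blast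
        hence "{x. a \<bullet> x \<le> 0} \<in> G" unfolding G_def using SF by auto
        thus ?thesis using x a by auto
      qed
      thus "x \<in> T" using x F(2) by auto
    qed
  qed
  thus ?thesis using cG coG by blast
qed

lemma cone_unit:
  fixes x :: "'a::euclidean_space"
  assumes "cone K" "x \<in> K" "x \<noteq> 0"
  shows "x /\<^sub>R norm x \<in> sphere 0 1 \<inter> K" "x = norm x *\<^sub>R (x /\<^sub>R norm x)"
proof -
  have "inverse (norm x) *\<^sub>R x \<in> K" using assms unfolding cone_def by simp
  thus "x /\<^sub>R norm x \<in> sphere 0 1 \<inter> K" using assms(3) by (simp add: norm_divide)
  show "x = norm x *\<^sub>R (x /\<^sub>R norm x)" using assms(3) by simp
qed

lemma cone_span:
  fixes K :: "'a::euclidean_space set"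
  assumes "cone K"
  shows "K \<subseteq> span (sphere 0 1 \<inter> K)"
proof
  fix x assume x: "x \<in> K"
  show "x \<in> span (sphere 0 1 \<inter> K)"
  proof (cases "x = 0")
    case True thus ?thesis by (simp add: span_0)
  next
    case False
    from cone_unit[OF assms x False]
    show ?thesis by (metis span_base span_mul)
  qed
qed

lemma cone_sub:
  fixes K :: "'a::euclidean_space set"
  assumes "cone K" "cone K'" "K' \<noteq> {}" "sphere 0 1 \<inter> K \<subseteq> K'"
  shows "K \<subseteq> K'"
proof
  fix x assume x: "x \<in> K"
  show "x \<in> K'"
  proof (cases "x = 0")
    case True
    obtain y where "y \<in> K'" using assms(3) by blast
    hence "0 *\<^sub>R y \<in> K'" using assms(2) cone_scale[of K' y 0] by simp
    thus ?thesis using True by simp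
  next
    case False
    from cone_unit[OF assms(1) x False] assms(4) have "x /\<^sub>R norm x \<in> K'" by blast
    hence "norm x *\<^sub>R (x /\<^sub>R norm x) \<in> K'" using cone_scale[OF assms(2) _ norm_ge_zero] by blast
    thus ?thesis using cone_unit(2)[OF assms(1) x False] by simp
  qed
qed

lemma cone_int_scale:
  fixes K :: "'a::euclidean_space set"
  assumes "cone K" "c > 0" "x \<in> interior K"
  shows "c *\<^sub>R x \<in> interior K"
proof -
  have "open ((\<lambda>y. c *\<^sub>R y) ` interior K)" using assms(2) by (intro open_scaling) auto
  moreover have "(\<lambda>y. c *\<^sub>R y) ` interior K \<subseteq> K"
    using assms(1,2) interior_subset[of K] unfolding cone_def by auto
  ultimately have "(\<lambda>y. c *\<^sub>R y) ` interior K \<subseteq> interior K" by (simp add: interior_maximal)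
  thus ?thesis using assms(3) by auto
qed

lemma thick_int:
  fixes K :: "'a::euclidean_space set"
  assumes co: "cone K" and T: "T = sphere 0 1 \<inter> K"
    and th: "top_of_set (sphere 0 1) interior_of T \<noteq> {}"
  shows "interior K \<noteq> {}"
proof -
  obtain x where "x \<in> top_of_set (sphere 0 1) interior_of T" using th by blast
  then obtain U where U: "openin (top_of_set (sphere 0 1)) U" "x \<in> U" "U \<subseteq> T"
    unfolding interior_of_def by blast
  then obtain V where V: "open V" "U = sphere 0 1 \<inter> V" using openin_open by blast
  have x1: "norm x = 1" using U V by auto
  define W where "W = (-{0}) \<inter> (\<lambda>y. y /\<^sub>R norm y) -` V"
  have "continuous_on (-{0}) (\<lambda>y::'a. y /\<^sub>R norm y)"
    by (intro continuous_intros) auto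
  hence oW: "open W" unfolding W_def using V(1)
    by (intro continuous_open_preimage) auto
  have xW: "x \<in> W" unfolding W_def using x1 U V by auto
  have "W \<subseteq> K"
  proof
    fix y assume y: "y \<in> W"
    hence y0: "y \<noteq> 0" and yV: "y /\<^sub>R norm y \<in> V" unfolding W_def by auto
    have "y /\<^sub>R norm y \<in> sphere 0 1" using y0 by (simp add: norm_divide)
    hence "y /\<^sub>R norm y \<in> K" using yV U V T by auto
    hence "norm y *\<^sub>R (y /\<^sub>R norm y) \<in> K" using cone_scale[OF co _ norm_ge_zero] by blast
    thus "y \<in> K" using y0 by simp
  qed
  hence "W \<subseteq> interior K" using oW by (simp add: interior_maximal)
  thus ?thesis using xW by blast
qed

lemma dis_sph:
  fixes K1 :: "'a::euclidean_space set"
  assumes co: "cone K1" "cone K2" and T: "T1 = sphere 0 1 \<inter> K1" "T2 = sphere 0 1 \<inter> K2"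
    and d: "top_of_set (sphere 0 1) interior_of T1 \<inter> top_of_set (sphere 0 1) interior_of T2 = {}"
  shows "interior K1 \<inter> interior K2 = {}"
proof (rule ccontr)
  assume ne: "interior K1 \<inter> interior K2 \<noteq> {}"
  define W where "W = interior K1 \<inter> interior K2"
  have oW: "open W" unfolding W_def by auto
  have "\<not> W \<subseteq> {0}"
  proof
    assume "W \<subseteq> {0}"
    hence "interior W \<subseteq> interior {0}" by (rule interior_mono)
    thus False using oW ne W_def by (simp add: interior_open)
  qed
  then obtain z where z: "z \<in> W" "z \<noteq> 0" by blast
  define u where "u = inverse (norm z) *\<^sub>R z"
  have u1: "u \<in> interior K1" "u \<in> interior K2"
    using z cone_int_scale[OF co(1), of "inverse (norm z)" z] cone_int_scale[OF co(2), of "inverse (norm z)" z]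
    unfolding u_def W_def by auto
  have us: "u \<in> sphere 0 1" using z(2) unfolding u_def by (simp add: norm_divide)
  define U where "U = sphere 0 1 \<inter> W"
  have oU: "openin (top_of_set (sphere 0 1)) U" unfolding U_def using oW
    by (auto simp: openin_open)
  have "U \<subseteq> T1" "U \<subseteq> T2" unfolding U_def W_def T using interior_subset by blast+
  hence "U \<subseteq> top_of_set (sphere 0 1) interior_of T1" "U \<subseteq> top_of_set (sphere 0 1) interior_of T2"
    using oU interior_of_maximal by blast+
  moreover have "u \<in> U" unfolding U_def W_def using u1 us by auto
  ultimately show False using d by blast
qed

lemma dim_tile:
  fixes K :: "'a::euclidean_space set"
  assumes "cone K" "interior K \<noteq> {}" "T = sphere 0 1 \<inter> K"
  shows "dim (span T) = DIM('a)"
proof -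
  have "interior K \<subseteq> span T" using cone_span[OF assms(1)] interior_subset assms(3) by blast
  hence "dim (interior K) \<le> dim (span T)" by (rule dim_subset)
  moreover have "dim (interior K) = dim (UNIV :: 'a set)"
    using dim_openin[of UNIV "interior K"] assms(2) by simp
  moreover have "dim (span T) \<le> DIM('a)" by (rule dim_subset_UNIV)
  ultimately show ?thesis by simp
qed



lemma sph_case:
  fixes \<T> :: "'a::euclidean_space set set" and C :: "'a set"
  assumes pt: "partial_tessellation Spherical \<T>"
    and sd: "side Spherical \<T> C"
  shows "\<exists>T1 T2. T1 \<in> \<T> \<and> T2 \<in> \<T> \<and> T1 \<noteq> T2 \<and> {T \<in> \<T>. C \<subseteq> T} = {T1, T2} \<and> C = T1 \<inter> T2"
proof -
  have sp: "space Spherical = (sphere 0 1 :: 'a set)" by (simp add: space_def)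
  have tileK: "\<forall>T\<in>\<T>. \<exists>K. convex K \<and> cone K \<and> T = sphere 0 1 \<inter> K"
    using pt sph_poly unfolding partial_tessellation_def by blast
  obtain Kf where Kf: "\<forall>T\<in>\<T>. convex (Kf T) \<and> cone (Kf T) \<and> T = sphere 0 1 \<inter> Kf T"
    using bchoice[OF tileK] by blast
  have ne: "T \<noteq> {}" if "T \<in> \<T>" for T
    using pt that unfolding partial_tessellation_def polyhedron_def by blast
  have Kne: "Kf T \<noteq> {}" if "T \<in> \<T>" for T using ne[OF that] Kf that by auto
  have th: "interior (Kf T) \<noteq> {}" if "T \<in> \<T>" for T
  proof -
    have "thick Spherical T" using pt that unfolding partial_tessellation_def by blast
    hence "top_of_set (sphere 0 1) interior_of T \<noteq> {}" unfolding thick_def sp .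
    thus ?thesis using thick_int[of "Kf T" T] Kf that by blast
  qed
  have dis: "interior (Kf T1) \<inter> interior (Kf T2) = {}" if "T1 \<in> \<T>" "T2 \<in> \<T>" "T1 \<noteq> T2" for T1 T2
  proof -
    have "top_of_set (sphere 0 1) interior_of T1 \<inter> top_of_set (sphere 0 1) interior_of T2 = {}"
      using pt that unfolding partial_tessellation_def sp by blast
    thus ?thesis using dis_sph[of "Kf T1" "Kf T2" T1 T2] Kf that by blast
  qed
  have tc: "codim Spherical T = 0" if "T \<in> \<T>" for T
  proof -
    have "dim (span T) = DIM('a)" using dim_tile[of "Kf T" T] Kf th that by blast
    thus ?thesis by (simp add: codim_def)
  qed
  obtain S where S: "C \<noteq> {}" "S \<subseteq> \<T>" "S \<noteq> {}" "C = \<Inter>S" and c1: "codim Spherical C = 1"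
    using sd unfolding side_def cell_def by blast
  define Kc where "Kc = \<Inter>(Kf ` S)"
  have cKc: "convex Kc" unfolding Kc_def using S Kf by (auto intro!: convex_Inter)
  have coKc: "cone Kc" unfolding Kc_def using S Kf by (auto intro!: cone_Inter)
  have SK: "\<forall>T\<in>S. T = sphere 0 1 \<inter> Kf T" using S Kf by auto
  have CK: "C = sphere 0 1 \<inter> Kc"
  proof
    show "C \<subseteq> sphere 0 1 \<inter> Kc" unfolding Kc_def using S(3,4) SK by blast
    show "sphere 0 1 \<inter> Kc \<subseteq> C" unfolding Kc_def using S(4) SK by blast
  qed
  obtain c where c: "c \<in> C" using S by blast
  have "c \<in> Kc" using c CK by blast
  hence "0 *\<^sub>R c \<in> Kc" using cone_scale[OF coKc] by blast
  hence K0: "0 \<in> Kc" by simp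
  have "int (dim (span C)) = int DIM('a) - 1" using c1 by (simp add: codim_def)
  hence "dim C = DIM('a) - 1" by (simp add: dim_span)
  then obtain a where a0: "a \<noteq> 0" and spC: "span C = {x. a \<bullet> x = 0}"
    using dim_eq_hyperplane[of C] by blast
  have spK: "span Kc = span C"
  proof
    show "span C \<subseteq> span Kc" using CK by (intro span_mono) blast
    have "Kc \<subseteq> span C" using cone_span[OF coKc] CK by simp
    hence "span Kc \<subseteq> span (span C)" by (rule span_mono)
    thus "span Kc \<subseteq> span C" by (metis span_span)
  qed
  have ahK: "affine hull Kc = {x. a \<bullet> x = 0}"
    using affine_hull_span_0[of Kc] K0 hull_subset[of Kc affine] spK spC by blast
  have "rel_interior Kc \<noteq> {}" using rel_interior_eq_empty[OF cKc] K0 by auto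
  then obtain p where "p \<in> rel_interior Kc" by blast
  then obtain r where pr: "p \<in> Kc" "r > 0" "ball p r \<inter> affine hull Kc \<subseteq> Kc"
    using mem_rel_interior_ball by blast
  have ap: "a \<bullet> p = 0" using pr(1) span_base[of p Kc] spK spC by auto
  show ?thesis
  proof (rule abstract_main[where K=Kf, OF S(4) S(2) S(3) _ a0 ap pr(2)])
    fix T assume T: "T \<in> \<T>" "C \<subseteq> T"
    have "sphere 0 1 \<inter> Kc \<subseteq> Kf T" using CK T Kf by auto
    hence "Kc \<subseteq> Kf T" using cone_sub[OF coKc _ Kne[OF T(1)]] Kf T by blast
    thus "convex (Kf T) \<and> interior (Kf T) \<noteq> {} \<and> ball p r \<inter> {y. a \<bullet> y = 0} \<subseteq> Kf T"
      using Kf th T pr(3) ahK by auto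
  next
    fix T1 T2 assume "T1 \<in> \<T>" "T2 \<in> \<T>" "T1 \<noteq> T2"
    thus "interior (Kf T1) \<inter> interior (Kf T2) = {}" using dis by simp
  next
    fix T assume "T \<in> \<T>"
    thus "C \<noteq> T" using tc c1 by auto
  qed
qed


theorem proposition4p4:
  fixes M :: geom and \<T> :: "'a::euclidean_space set set" and C :: "'a set"
  assumes "partial_tessellation M \<T>"
    and "locally_finite_fam M \<T>"
    and "side M \<T> C"
  shows "\<exists>T1 T2. T1 \<in> \<T> \<and> T2 \<in> \<T> \<and> T1 \<noteq> T2 \<and> {T \<in> \<T>. C \<subseteq> T} = {T1, T2} \<and> C = T1 \<inter> T2"
proof (cases "M = Spherical")
  case True
  thus ?thesis using sph_case[of \<T> C] assms by simp
next
  case False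
  thus ?thesis using flat_case[of M \<T> C] assms by simp
qed

end
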